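(* Let $X$ be a nonempty compact metric space, $Y$ a compact metric space and $\mathcal Y$ an $(X)$-regularizing family for $Y$. Then every point $p\in Y$ is the limit of some sequence $(Z_n)$ of pairwise distinct members of $\mathcal Y$, i.e. for some (equivalently, every) choice of points $p_n\in Z_n$ we have $p_n\to p$.
   Context: An $(X)$-regularizing family for $Y$ is a countably infinite family $\mathcal Y$ of subsets of $Y$ such that: (a1) the members are pairwise disjoint subspaces homeomorphic to $X$; (a2) $\mathcal Y$ is null (for every $\varepsilon>0$ only finitely many members have diameter $\ge\varepsilon$); (a3) each member has dense complement in $Y$; (a4) $\bigcup\mathcal Y$ is dense in $Y$; (a5) any two points not in a common member of $\mathcal Y$ are separated by an open, closed, $\mathcal Y$-saturated subset of $Y$ (each member is contained in it or disjoint from it). *)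

theory Defs
  imports "HOL-Analysis.Analysis"
begin

definition regularizing_family :: "'a::metric_space set \<Rightarrow> 'b::metric_space set \<Rightarrow> 'b set set \<Rightarrow> bool" where
  "regularizing_family X Y \<F> \<longleftrightarrow>
     countable \<F> \<and> infinite \<F> \<and> (\<forall>Z\<in>\<F>. Z \<subseteq> Y) \<and>
     \<comment> \<open>(a1)\<close>
     disjoint \<F> \<and> (\<forall>Z\<in>\<F>. Z homeomorphic X) \<and>
     \<comment> \<open>(a2)\<close>
     (\<forall>\<epsilon>>0. finite {Z\<in>\<F>. diameter Z \<ge> \<epsilon>}) \<and>
     \<comment> \<open>(a3)\<close>
     (\<forall>Z\<in>\<F>. Y \<subseteq> closure (Y - Z)) \<and>
     \<comment> \<open>(a4)\<close>
     Y \<subseteq> closure (\<Union>\<F>) \<and>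
     \<comment> \<open>(a5)\<close>
     (\<forall>p\<in>Y. \<forall>q\<in>Y. p \<noteq> q \<and> \<not> (\<exists>Z\<in>\<F>. p \<in> Z \<and> q \<in> Z) \<longrightarrow>
        (\<exists>U. openin (top_of_set Y) U \<and> closedin (top_of_set Y) U \<and>
             (\<forall>Z\<in>\<F>. Z \<subseteq> U \<or> Z \<inter> U = {}) \<and> p \<in> U \<and> q \<notin> U))"

end

theory Submission
  imports Defs
begin

lemma meets_infinite:
  fixes X :: "'a::metric_space set" and Y :: "'b::metric_space set" and \<F> :: "'b set set"
  assumes "compact X" and "regularizing_family X Y \<F>" and "p \<in> Y" and "\<epsilon> > 0"
  shows "infinite {Z\<in>\<F>. Z \<inter> ball p \<epsilon> \<noteq> {}}"
proof
  let ?S = "{Z\<in>\<F>. Z \<inter> ball p \<epsilon> \<noteq> {}}"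
  assume fin: "finite ?S"
  have RF: "disjoint \<F>" "\<forall>Z\<in>\<F>. Z homeomorphic X" "\<forall>Z\<in>\<F>. Y \<subseteq> closure (Y - Z)"
     "Y \<subseteq> closure (\<Union>\<F>)"
    using assms(2) unfolding regularizing_family_def by auto
  have cpt: "compact Z" if "Z \<in> \<F>" for Z
    using RF(2) that assms(1) homeomorphic_compactness by blast
  have clW: "closed (\<Union>T)" if "T \<subseteq> ?S" for T
  proof -
    have "finite T" using fin that finite_subset by blast
    moreover have "\<forall>Z\<in>T. closed Z" using that cpt compact_imp_closed by blast
    ultimately show ?thesis by blast
  qed
  have sub: "Y \<inter> ball p \<epsilon> \<subseteq> \<Union>?S"
  proof
    fix q assume q: "q \<in> Y \<inter> ball p \<epsilon>"
    have "q \<in> closure (\<Union>?S)"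
      unfolding closure_approachable
    proof (intro allI impI)
      fix e :: real assume e: "e > 0"
      have c: "q \<in> closure (\<Union>\<F>)" using q RF(4) by auto
      have m: "min e (\<epsilon> - dist p q) > 0" using q e by auto
      obtain y where y: "y \<in> \<Union>\<F>" "dist y q < min e (\<epsilon> - dist p q)"
        using closure_approachable[THEN iffD1, OF c, rule_format, OF m] by blast
      have "dist p y < \<epsilon>" using y(2) dist_triangle[of p y q] by (simp add: dist_commute)
      then have "y \<in> \<Union>?S" using y(1) by (blast intro: mem_ball[THEN iffD2])
      then show "\<exists>y\<in>\<Union>?S. dist y q < e" using y(2) by auto
    qed
    then show "q \<in> \<Union>?S" using clW[of ?S] closure_closed by auto
  qed
  moreover have "p \<in> Y \<inter> ball p \<epsilon>" using assms(3,4) by simp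
  ultimately obtain Z0 where Z0: "Z0 \<in> ?S" "p \<in> Z0" by blast
  let ?C = "\<Union>(?S - {Z0})"
  have "closed ?C" by (rule clW) blast
  moreover have "p \<notin> ?C"
  proof
    assume "p \<in> ?C"
    then obtain Z where "Z \<in> ?S" "Z \<noteq> Z0" "p \<in> Z" by auto
    then show False using RF(1) Z0 unfolding disjoint_def by blast
  qed
  ultimately obtain \<delta> where d: "\<delta> > 0" "ball p \<delta> \<inter> ?C = {}"
  proof -
    have "open (- ?C)" using \<open>closed ?C\<close> by (simp add: open_Compl)
    then obtain \<delta> where "\<delta> > 0" "ball p \<delta> \<subseteq> - ?C"
      using open_contains_ball[THEN iffD1, OF \<open>open (- ?C)\<close>] \<open>p \<notin> ?C\<close>
      by (meson ComplI)
    then show ?thesis using that by (simp add: disjoint_iff subset_iff)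
  qed
  have c: "p \<in> closure (Y - Z0)" using RF(3) Z0 assms(3) by auto
  have m: "min \<delta> \<epsilon> > 0" using d assms(4) by auto
  obtain y where y: "y \<in> Y - Z0" "dist y p < min \<delta> \<epsilon>"
    using closure_approachable[THEN iffD1, OF c, rule_format, OF m] by blast
  then have "y \<in> Y \<inter> ball p \<epsilon>" by (auto simp: dist_commute)
  then have "y \<in> \<Union>?S" by (rule subsetD[OF sub])
  then have "y \<in> ?C" using y(1) by blast
  moreover have "y \<in> ball p \<delta>" using y(2) by (auto simp: dist_commute)
  ultimately show False using d(2) by blast
qed

lemma small_infinite:
  fixes X :: "'a::metric_space set" and Y :: "'b::metric_space set" and \<F> :: "'b set set"
  assumes "compact X" and "regularizing_family X Y \<F>" and "p \<in> Y" and "\<epsilon> > 0"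
  shows "infinite {Z\<in>\<F>. Z \<subseteq> ball p \<epsilon>}"
proof -
  have inf: "infinite {Z\<in>\<F>. Z \<inter> ball p (\<epsilon>/2) \<noteq> {}}"
    using meets_infinite[OF assms(1-3), of "\<epsilon>/2"] assms(4) by simp
  have fin: "finite {Z\<in>\<F>. diameter Z \<ge> \<epsilon>/2}"
  proof -
    have "\<forall>\<epsilon>>0. finite {Z\<in>\<F>. diameter Z \<ge> \<epsilon>}"
      using assms(2) unfolding regularizing_family_def by blast
    moreover have "\<epsilon>/2 > 0" using assms(4) by simp
    ultimately show ?thesis by blast
  qed
  have cpt: "compact Z" if "Z \<in> \<F>" for Z
  proof -
    have "\<forall>Z\<in>\<F>. Z homeomorphic X" using assms(2) unfolding regularizing_family_def by blast
    then show ?thesis using that assms(1) homeomorphic_compactness by blast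
  qed
  have "{Z\<in>\<F>. Z \<inter> ball p (\<epsilon>/2) \<noteq> {}} - {Z\<in>\<F>. diameter Z \<ge> \<epsilon>/2} \<subseteq> {Z\<in>\<F>. Z \<subseteq> ball p \<epsilon>}"
  proof
    fix Z assume Z: "Z \<in> {Z\<in>\<F>. Z \<inter> ball p (\<epsilon>/2) \<noteq> {}} - {Z\<in>\<F>. diameter Z \<ge> \<epsilon>/2}"
    then obtain x where x: "x \<in> Z" "dist p x < \<epsilon>/2" by auto
    have dZ: "diameter Z < \<epsilon>/2" "Z \<in> \<F>" using Z by auto
    have "bounded Z" using cpt dZ(2) compact_imp_bounded by blast
    have "y \<in> ball p \<epsilon>" if "y \<in> Z" for y
    proof -
      have "dist x y \<le> diameter Z" using diameter_bounded_bound \<open>bounded Z\<close> x(1) that by blast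
      then show ?thesis using x(2) dZ dist_triangle[of p y x] by (simp add: dist_commute)
    qed
    then show "Z \<in> {Z\<in>\<F>. Z \<subseteq> ball p \<epsilon>}" using dZ by auto
  qed
  moreover have "infinite ({Z\<in>\<F>. Z \<inter> ball p (\<epsilon>/2) \<noteq> {}} - {Z\<in>\<F>. diameter Z \<ge> \<epsilon>/2})"
    using inf fin by (meson Diff_infinite_finite)
  ultimately show ?thesis using finite_subset by blast
qed

theorem fact2:
  fixes X :: "'a::metric_space set" and Y :: "'b::metric_space set" and \<F> :: "'b set set"
  assumes "compact X" and "X \<noteq> {}" and "compact Y"
    and "regularizing_family X Y \<F>"
    and "p \<in> Y"
  shows "\<exists>Zs :: nat \<Rightarrow> 'b set. inj Zs \<and> (\<forall>n. Zs n \<in> \<F>) \<and>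
           (\<forall>ps. (\<forall>n. ps n \<in> Zs n) \<longrightarrow> ps \<longlonglongrightarrow> p)"
proof -
  define e where "e = from_nat_into \<F>"
  have bij: "bij_betw e UNIV \<F>"
  proof -
    have "countable \<F>" "infinite \<F>" using assms(4) unfolding regularizing_family_def by auto
    then show ?thesis unfolding e_def by (rule bij_betw_from_nat_into)
  qed
  define I where "I n = {j. e j \<subseteq> ball p (1 / (real n + 1))}" for n
  have infI: "infinite (I n)" for n
  proof
    assume "finite (I n)"
    then have "finite (e ` I n)" by simp
    moreover have sb: "{Z\<in>\<F>. Z \<subseteq> ball p (1 / (real n + 1))} \<subseteq> e ` I n"
    proof
      fix Z assume Z: "Z \<in> {Z\<in>\<F>. Z \<subseteq> ball p (1 / (real n + 1))}"
      then obtain j where "Z = e j" using bij unfolding bij_betw_def by blast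
      then show "Z \<in> e ` I n" using Z unfolding I_def by blast
    qed
    ultimately have "finite {Z\<in>\<F>. Z \<subseteq> ball p (1 / (real n + 1))}"
      by (rule finite_subset[rotated])
    moreover have "infinite {Z\<in>\<F>. Z \<subseteq> ball p (1 / (real n + 1))}"
      by (rule small_infinite[OF assms(1,4,5)]) simp
    ultimately show False by contradiction
  qed
  have ex: "\<exists>j>m. j \<in> I n" for m n using infI infinite_nat_iff_unbounded by blast
  define k where "k = rec_nat (LEAST j. j \<in> I 0) (\<lambda>n kn. LEAST j. j > kn \<and> j \<in> I (Suc n))"
  have k0: "k 0 = (LEAST j. j \<in> I 0)" and kS: "k (Suc n) = (LEAST j. j > k n \<and> j \<in> I (Suc n))" for n
    unfolding k_def by simp_all
  have kI: "k n \<in> I n" for n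
  proof (cases n)
    case 0 then show ?thesis using k0 ex[of 0 0] by (metis LeastI)
  next
    case (Suc m) then show ?thesis using kS[of m] ex[of "k m" "Suc m"] by (metis (mono_tags, lifting) LeastI)
  qed
  have kgt: "k (Suc n) > k n" for n
    using kS[of n] ex[of "k n" "Suc n"] by (metis (mono_tags, lifting) LeastI)
  have smk: "strict_mono k" using kgt strict_mono_Suc_iff by blast
  define Zs where "Zs n = e (k n)" for n
  have "inj Zs"
  proof (rule injI)
    fix a b assume "Zs a = Zs b"
    then have "e (k a) = e (k b)" unfolding Zs_def .
    then have "k a = k b" using bij unfolding bij_betw_def inj_on_def by blast
    then show "a = b" using strict_mono_eq[OF smk] by blast
  qed
  moreover have "\<forall>n. Zs n \<in> \<F>" using bij unfolding Zs_def bij_betw_def by auto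
  moreover have "\<forall>ps. (\<forall>n. ps n \<in> Zs n) \<longrightarrow> ps \<longlonglongrightarrow> p"
  proof (intro allI impI)
    fix ps assume ps: "\<forall>n. ps n \<in> Zs n"
    have d: "dist (ps n) p < 1 / (real n + 1)" for n
      using ps kI[of n] unfolding I_def Zs_def by (auto simp: dist_commute)
    show "ps \<longlonglongrightarrow> p"
    proof (rule metric_LIMSEQ_I)
      fix r :: real assume r: "r > 0"
      obtain N :: nat where N: "1 / r < real N" using reals_Archimedean2 by blast
      have "dist (ps n) p < r" if "n \<ge> N" for n
      proof -
        have "1 / (real n + 1) \<le> 1 / (real N + 1)" using that by (simp add: frac_le)
        also have "\<dots> < r" using N r by (simp add: divide_less_eq mult.commute) (smt (verit) divide_less_eq mult.commute)
        finally show ?thesis using d[of n] by linarith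
      qed
      then show "\<exists>N. \<forall>n\<ge>N. dist (ps n) p < r" by blast
    qed
  qed
  ultimately show ?thesis by blast
qed

end
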